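(* Let $N\ge1$, $K>0$, $r_1,\dots,r_N>0$, and let $(\mu_{ij})$ be a nonnegative, symmetric, irreducible $N\times N$ matrix. Let $v(t)$ be the solution of $$\frac{dv_i}{dt}=v_i\left[r_i-\frac{1}{K}\sum_{j=1}^Nr_jv_j\right]+\sum_{j=1}^N\mu_{ij}(v_j-v_i),\qquad i=1,\dots,N,$$ with initial datum $v(0)\in[0,\infty)^N$ not identically zero, and let $\mathcal{N}(t)=\sum_{i=1}^Nv_i(t)$. Then $\mathcal{N}(t)$ converges exponentially fast to $K$ as $t\to\infty$. Moreover, for all $t\ge0$, $$\min\{\mathcal{N}_{min}(t),\mathcal{N}_{max}(t)\}\le\mathcal{N}(t)\le\max\{\mathcal{N}_{min}(t),\mathcal{N}_{max}(t)\},$$ where $\mathcal{N}_{min}$ and $\mathcal{N}_{max}$ are the solutions of the logistic equations $\frac{du}{dt}=\xi^{\pm}u\left(1-\frac uK\right)$, $u(0)=\mathcal{N}(0)$, with $\xi^-=\min\{r_1,\dots,r_N\}$ (for $\mathcal{N}_{min}$) and $\xi^+=\max\{r_1,\dots,r_N\}$ (for $\mathcal{N}_{max}$). *)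

theory Defs
  imports "HOL-Analysis.Analysis"
begin

text \<open>A nonnegative square matrix is irreducible iff its associated directed graph
(edge i \<rightarrow> j iff the (i,j) entry is nonzero) is strongly connected.\<close>
definition irreducible_matrix :: "real^'n^'n \<Rightarrow> bool" where
  "irreducible_matrix A \<longleftrightarrow>
     (\<forall>i j. (i, j) \<in> {(k, l). A $ k $ l \<noteq> 0}\<^sup>*)"

end

theory Submission
  imports Defs
begin


lemma comp_deriv:
  "(v has_vector_derivative D) F \<Longrightarrow> ((\<lambda>t. v t $ i) has_real_derivative D $ i) F"
  using bounded_linear.has_vector_derivative[OF bounded_linear_vec_nth, of v D F i]
  by (simp add: has_real_derivative_iff_has_vector_derivative)

lemma deriv_cont:
  assumes "\<And>t. t \<in> {0..T} \<Longrightarrow> ((f::real\<Rightarrow>real) has_real_derivative f' t) (at t within {0..})"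
  shows "continuous_on {0..T} f"
proof -
  have "\<And>t. t \<in> {0..T} \<Longrightarrow> continuous (at t within {0..T}) f"
  proof -
    fix t assume t: "t \<in> {0..T}"
    have "continuous (at t within {0..}) f"
      using assms[OF t] by (rule DERIV_continuous)
    then show "continuous (at t within {0..T}) f"
      by (rule continuous_within_subset) auto
  qed
  then show ?thesis by (simp add: continuous_on_eq_continuous_within)
qed

lemma mono_deriv:
  assumes "\<And>t. t \<in> {0..T} \<Longrightarrow> ((f::real\<Rightarrow>real) has_real_derivative f' t) (at t within {0..})"
    and "\<And>t. t \<in> {0..T} \<Longrightarrow> f' t \<ge> 0"
    and "t \<in> {0..T}"
  shows "f 0 \<le> f t"
proof (rule DERIV_nonneg_imp_increasing_open[of 0 t f])
  show "0 \<le> t" using assms(3) by auto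
  show "continuous_on {0..t} f"
    by (rule continuous_on_subset[OF deriv_cont[OF assms(1)]]) (use assms(3) in auto)
  fix x assume x: "0 < x" "x < t"
  have "x \<in> interior {0::real..}" using x by auto
  then have "at x within {0..} = at x" by (rule at_within_interior)
  then have "DERIV f x :> f' x" using assms(1)[of x] x assms(3) by auto
  then show "\<exists>y. DERIV f x :> y \<and> 0 \<le> y" using assms(2)[of x] x assms(3) by auto
qed

lemma first_time:
  fixes g :: "'i::finite \<Rightarrow> real \<Rightarrow> real"
  assumes cont: "\<And>i. continuous_on {0..T} (g i)"
    and pos0: "\<And>i. g i 0 > 0"
    and t: "t \<in> {0..T}" "g i0 t \<le> 0"
  shows "\<exists>s i. 0 < s \<and> s \<le> T \<and> g i s = 0 \<and> (\<forall>j. g j s \<ge> 0)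
           \<and> (\<forall>j x. 0 \<le> x \<and> x < s \<longrightarrow> g j x > 0)"
proof -
  define A where "A = (\<Union>i. {x \<in> {0..T}. g i x \<le> (\<lambda>_. 0) x})"
  have clA: "closed A" unfolding A_def
    by (intro closed_UN finite_UNIV ballI continuous_on_closed_Collect_le cont continuous_on_const) auto
  have "t \<in> A" using t unfolding A_def by auto
  then have ne: "A \<noteq> {}" by auto
  have bdd: "bdd_below A" unfolding A_def by (rule bdd_belowI[of _ 0]) auto
  define s where "s = Inf A"
  have sA: "s \<in> A" unfolding s_def using closed_contains_Inf[OF ne bdd clA] .
  then obtain i where i: "s \<in> {0..T}" "g i s \<le> 0" unfolding A_def by auto
  have below: "\<And>x. x \<in> A \<Longrightarrow> s \<le> x" unfolding s_def using bdd by (simp add: cInf_lower)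
  have s0: "s \<noteq> 0" using i pos0[of i] by auto
  have before: "\<forall>j x. 0 \<le> x \<and> x < s \<longrightarrow> g j x > 0"
  proof (intro allI impI)
    fix j x assume x: "0 \<le> x \<and> x < s"
    show "g j x > 0"
    proof (rule ccontr)
      assume "\<not> g j x > 0"
      then have "x \<in> A" unfolding A_def using x i by (intro UN_I[of j]) auto
      then show False using below x by fastforce
    qed
  qed
  have nonneg: "\<forall>j. g j s \<ge> 0"
  proof
    fix j show "g j s \<ge> 0"
    proof (rule ccontr)
      assume neg: "\<not> g j s \<ge> 0"
      have "continuous_on {0..s} (g j)"
        by (rule continuous_on_subset[OF cont]) (use i in auto)
      then obtain x where x: "0 \<le> x" "x \<le> s" "g j x = 0"
        using IVT2'[of "g j" s 0 0] neg pos0[of j] i by auto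
      then have "x \<noteq> s" using neg by auto
      then have "x < s" using x by auto
      then have "g j x > 0" using before x(1) by blast
      then show False using x(3) by simp
    qed
  qed
  have gi: "g i s = 0" using nonneg i(2) by (meson order_antisym)
  have "0 < s" using s0 i(1) by auto
  moreover have "s \<le> T" using i(1) by simp
  ultimately show ?thesis using gi nonneg before by (intro exI[of _ s] exI[of _ i] conjI)
qed

lemma logistic_local:
  fixes u D \<rho> :: "real \<Rightarrow> real"
  assumes K: "K > 0"
    and der: "\<And>t. t \<ge> 0 \<Longrightarrow> (u has_real_derivative D t) (at t within {0..})"
    and rho: "\<And>t. t \<ge> 0 \<Longrightarrow> u t > 0 \<Longrightarrow> \<xi>1 \<le> \<rho> t \<and> \<rho> t \<le> \<xi>2 \<and> D t = \<rho> t * u t * (1 - u t / K)"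
    and posT: "\<And>t. t \<in> {0..T} \<Longrightarrow> u t > 0"
    and t: "t \<in> {0..T}"
  shows "(1/u t - 1/K)^2 * exp(2*\<xi>1*t) \<le> (1/u 0 - 1/K)^2
       \<and> (1/u 0 - 1/K)^2 \<le> (1/u t - 1/K)^2 * exp(2*\<xi>2*t)
       \<and> (1/u t - 1/K) * (1/u 0 - 1/K) \<ge> 0"
proof -
  define Z where "Z t = 1/u t - 1/K" for t
  have dZ: "(Z has_real_derivative (-\<rho> t * Z t)) (at t within {0..})" if t: "t \<in> {0..T}" for t
  proof -
    have ne: "u t \<noteq> 0" using posT[OF t] by auto
    have "((\<lambda>t. inverse (u t) - 1/K) has_real_derivative (- (D t * inverse (u t ^ Suc (Suc 0)))) - 0) (at t within {0..})"
      by (rule DERIV_diff[OF DERIV_inverse_fun[OF der ne] DERIV_const]) (use t in auto)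
    moreover have "(- (D t * inverse (u t ^ Suc (Suc 0)))) - 0 = -\<rho> t * Z t"
      using rho[of t] posT[OF t] t K ne unfolding Z_def by (auto simp: field_simps power2_eq_square)
    moreover have "(\<lambda>t. inverse (u t) - 1/K) = Z" unfolding Z_def by (auto simp: divide_inverse)
    ultimately show ?thesis by simp
  qed
  have dW1: "((\<lambda>t. - (Z t ^ 2 * exp (2*\<xi>1*t))) has_real_derivative
      (2 * Z t ^ 2 * exp (2*\<xi>1*t) * (\<rho> t - \<xi>1))) (at t within {0..})" if t: "t \<in> {0..T}" for t
    by (rule derivative_eq_intros dZ[OF t] refl | simp add: algebra_simps power2_eq_square)+
  have dW2: "((\<lambda>t. Z t ^ 2 * exp (2*\<xi>2*t)) has_real_derivative
      (2 * Z t ^ 2 * exp (2*\<xi>2*t) * (\<xi>2 - \<rho> t))) (at t within {0..})" if t: "t \<in> {0..T}" for t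
    by (rule derivative_eq_intros dZ[OF t] refl | simp add: algebra_simps power2_eq_square)+
  have W1: "Z t ^ 2 * exp (2*\<xi>1*t) \<le> Z 0 ^ 2" if t: "t \<in> {0..T}" for t
  proof -
    have "- (Z 0 ^ 2 * exp (2*\<xi>1*0)) \<le> - (Z t ^ 2 * exp (2*\<xi>1*t))"
    proof (rule mono_deriv[OF dW1 _ t])
      fix y :: real assume y: "y \<in> {0..T}"
      have "0 \<le> \<rho> y - \<xi>1" using rho[of y] posT[OF y] y by auto
      then show "0 \<le> 2 * Z y ^ 2 * exp (2*\<xi>1*y) * (\<rho> y - \<xi>1)"
        by simp
    qed
    then show ?thesis by simp
  qed
  have W2: "Z 0 ^ 2 \<le> Z t ^ 2 * exp (2*\<xi>2*t)" if t: "t \<in> {0..T}" for t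
  proof -
    have "Z 0 ^ 2 * exp (2*\<xi>2*0) \<le> Z t ^ 2 * exp (2*\<xi>2*t)"
    proof (rule mono_deriv[OF dW2 _ t])
      fix y :: real assume y: "y \<in> {0..T}"
      have "0 \<le> \<xi>2 - \<rho> y" using rho[of y] posT[OF y] y by auto
      then show "0 \<le> 2 * Z y ^ 2 * exp (2*\<xi>2*y) * (\<xi>2 - \<rho> y)"
        by simp
    qed
    then show ?thesis by simp
  qed
  have contZ: "continuous_on {0..T} Z" by (rule deriv_cont[OF dZ])
  have sign: "Z t * Z 0 \<ge> 0"
  proof (cases "Z 0 = 0")
    case True then show ?thesis by simp
  next
    case False
    have nz: "Z x \<noteq> 0" if x: "x \<in> {0..T}" for x
    proof
      assume "Z x = 0"
      then show False using W2[OF x] False by simp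
    qed
    show ?thesis
    proof (rule ccontr)
      assume neg: "\<not> Z t * Z 0 \<ge> 0"
      have c: "continuous_on {0..t} (\<lambda>x. Z x * Z 0)"
        by (intro continuous_on_mult continuous_on_const continuous_on_subset[OF contZ]) (use t in auto)
      obtain x where x: "0 \<le> x" "x \<le> t" "Z x * Z 0 = 0"
        using IVT2'[of "\<lambda>x. Z x * Z 0" t 0 0, OF _ _ _ c] neg t by (auto simp: power2_eq_square[symmetric])
      then show False using nz[of x] False t by auto
    qed
  qed
  show ?thesis using W1[OF t] W2[OF t] sign unfolding Z_def by auto
qed



lemma logistic_global:
  fixes u D \<rho> :: "real \<Rightarrow> real"
  assumes K: "K > 0" and xi1: "\<xi>1 \<ge> 0" and u0: "u 0 > 0"
    and der: "\<And>t. t \<ge> 0 \<Longrightarrow> (u has_real_derivative D t) (at t within {0..})"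
    and rho: "\<And>t. t \<ge> 0 \<Longrightarrow> u t > 0 \<Longrightarrow> \<xi>1 \<le> \<rho> t \<and> \<rho> t \<le> \<xi>2 \<and> D t = \<rho> t * u t * (1 - u t / K)"
    and t: "t \<ge> 0"
  shows "u t > 0 \<and> (1/u t - 1/K)^2 * exp(2*\<xi>1*t) \<le> (1/u 0 - 1/K)^2
       \<and> (1/u 0 - 1/K)^2 \<le> (1/u t - 1/K)^2 * exp(2*\<xi>2*t)
       \<and> (1/u t - 1/K) * (1/u 0 - 1/K) \<ge> 0"
proof -
  define m where "m = min (u 0) K"
  have m: "m > 0" using u0 K unfolding m_def by auto
  have lower: "u x \<ge> m" if posT: "\<And>y. y \<in> {0..T} \<Longrightarrow> u y > 0" and x: "x \<in> {0..T}" for T x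
  proof -
    note L = logistic_local[OF K der rho posT x]
    define Z where "Z = 1/u x - 1/K"
    define Z0 where "Z0 = 1/u 0 - 1/K"
    have e: "exp(2*\<xi>1*x) \<ge> 1" using xi1 x by auto
    have "Z^2 \<le> Z^2 * exp(2*\<xi>1*x)" using e by (simp add: mult_le_cancel_left1)
    also have "\<dots> \<le> Z0^2" using L unfolding Z_def Z0_def by auto
    finally have sq: "Z^2 \<le> Z0^2" .
    then have ab: "\<bar>Z\<bar> \<le> \<bar>Z0\<bar>" by (simp add: abs_le_square_iff)
    have sg: "Z * Z0 \<ge> 0" using L unfolding Z_def Z0_def by auto
    have ux: "u x > 0" using posT x by auto
    have "1 / u x \<le> max (1/u 0) (1/K)"
    proof (cases "Z0 \<ge> 0")
      case True
      then have "Z \<le> Z0" using ab sg by (cases "Z0 = 0") (auto simp: zero_le_mult_iff)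
      then show ?thesis unfolding Z_def Z0_def by auto
    next
      case False
      then have "Z \<le> 0" using sg by (simp add: zero_le_mult_iff)
      then show ?thesis unfolding Z_def by auto
    qed
    also have "max (1/u 0) (1/K) = 1 / m"
    proof (cases "u 0 \<le> K")
      case True
      then have "1/K \<le> 1/u 0" using u0 by (intro divide_left_mono) auto
      then show ?thesis using True unfolding m_def by (simp add: min_absorb1 max_absorb1)
    next
      case False
      then have "1/u 0 \<le> 1/K" using K by (intro divide_left_mono) auto
      then show ?thesis using False unfolding m_def by (simp add: min_absorb2 max_absorb2)
    qed
    finally have "1 / u x \<le> 1 / m" .
    then show ?thesis using ux m by (auto simp: field_simps)
  qed
  have pos: "u x > 0" if x: "x \<ge> 0" for x
  proof (rule ccontr)
    assume nx: "\<not> u x > 0"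
    have c: "continuous_on {0..x} (\<lambda>y. u y - m/2)"
      by (intro continuous_on_diff continuous_on_const deriv_cont[OF der]) auto
    have g0: "u 0 - m/2 > 0" using m unfolding m_def by auto
    have gx: "u x - m/2 \<le> 0" using nx m by auto
    obtain s where s: "0 < s" "s \<le> x" "u s - m/2 = 0" "\<forall>y. 0 \<le> y \<and> y < s \<longrightarrow> u y - m/2 > 0"
      using first_time[of x "\<lambda>(_::unit) y. u y - m/2" x "()", OF c g0 _ gx] x by auto
    have "u y > 0" if y: "y \<in> {0..s}" for y
    proof (cases "y = s")
      case True then show ?thesis using s m by auto
    next
      case False then show ?thesis using s(4)[rule_format, of y] y m by auto
    qed
    then have "u s \<ge> m" using lower[of s s] s by auto
    then show False using s m by auto
  qed
  have py: "\<And>y. y \<in> {0..t} \<Longrightarrow> u y > 0" using pos by auto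
  have tt: "t \<in> {0..t}" using t by simp
  note L = logistic_local[OF K der rho py tt]
  show ?thesis using pos[OF t] L by blast
qed



lemma v_nonneg:
  fixes K :: real and r :: "real^'n" and \<mu> :: "real^'n^'n" and v :: "real \<Rightarrow> real^'n"
  assumes K_pos: "K > 0"
    and mu_nonneg: "\<And>i j. \<mu> $ i $ j \<ge> 0"
    and v_ode: "\<And>t. t \<ge> 0 \<Longrightarrow>
        (v has_vector_derivative
           (\<chi> i. v t $ i * (r $ i - (1 / K) * (\<Sum>j\<in>UNIV. r $ j * v t $ j))
                 + (\<Sum>j\<in>UNIV. \<mu> $ i $ j * (v t $ j - v t $ i))))
        (at t within {0..})"
    and v0_nonneg: "\<And>i. v 0 $ i \<ge> 0"
    and t: "t \<ge> 0"
  shows "v t $ i \<ge> 0"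
proof -
  define S where "S t = (\<Sum>j\<in>UNIV. r $ j * v t $ j)" for t
  have dv: "((\<lambda>t. v t $ i) has_real_derivative
      (v t $ i * (r $ i - (1 / K) * S t) + (\<Sum>j\<in>UNIV. \<mu> $ i $ j * (v t $ j - v t $ i)))) (at t within {0..})"
    if "t \<ge> 0" for t i
    using comp_deriv[OF v_ode[OF that], of i] unfolding S_def by simp
  have dS: "(S has_real_derivative (\<Sum>j\<in>UNIV. r $ j * (v t $ j * (r $ j - (1 / K) * S t) + (\<Sum>k\<in>UNIV. \<mu> $ j $ k * (v t $ k - v t $ j)))))
      (at t within {0..})" if "t \<ge> 0" for t
    unfolding S_def[abs_def] by (intro DERIV_sum DERIV_cmult dv[OF that, unfolded S_def])
  have contS: "continuous_on {0..t} S" by (rule deriv_cont[OF dS]) auto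
  have "compact (S ` {0..t})" by (intro compact_continuous_image contS compact_Icc)
  then have "bounded (S ` {0..t})" by (rule compact_imp_bounded)
  then obtain B where B0: "\<forall>x\<in>S ` {0..t}. \<bar>x\<bar> \<le> B" unfolding bounded_real by blast
  then have B: "\<And>y. y \<in> {0..t} \<Longrightarrow> \<bar>S y\<bar> \<le> B" by auto
  define M where "M = Max (range (\<lambda>i. r $ i)) + B / K + 1"
  have M: "M > r $ i - S y / K" if "y \<in> {0..t}" for i y
  proof -
    have "r $ i \<le> Max (range (\<lambda>i. r $ i))" by (intro Max_ge) auto
    moreover have "- S y \<le> B" using B[OF that] by auto
    then have "- S y / K \<le> B / K" using K_pos by (intro divide_right_mono) auto
    then have "- (S y / K) \<le> B / K" by simp
    ultimately show ?thesis unfolding M_def by linarith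
  qed
  have main: "v y $ i + \<epsilon> * exp (M * y) > 0" if eps: "\<epsilon> > 0" and y: "y \<in> {0..t}" for \<epsilon> y i
  proof (rule ccontr)
    assume ny: "\<not> v y $ i + \<epsilon> * exp (M * y) > 0"
    define g where "g i x = v x $ i + \<epsilon> * exp (M * x)" for i x
    have dg: "(g i has_real_derivative
      (v x $ i * (r $ i - (1 / K) * S x) + (\<Sum>j\<in>UNIV. \<mu> $ i $ j * (v x $ j - v x $ i)) + \<epsilon> * (exp (M * x) * M)))
      (at x within {0..})" if "x \<ge> 0" for x i
    proof -
      have e: "((\<lambda>x. exp (M * x)) has_real_derivative exp (M * x) * M) (at x within {0..})"
        by (auto intro!: derivative_eq_intros)
      show ?thesis unfolding g_def[abs_def] by (rule DERIV_add[OF dv[OF that] DERIV_cmult[OF e]])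
    qed
    have cg: "continuous_on {0..t} (g i)" for i by (rule deriv_cont[OF dg]) auto
    have g0: "g i 0 > 0" for i using v0_nonneg[of i] eps unfolding g_def by (auto intro: add_nonneg_pos)
    obtain s j where s: "0 < s" "s \<le> t" "g j s = 0" "\<forall>k. g k s \<ge> 0"
        "\<forall>k x. 0 \<le> x \<and> x < s \<longrightarrow> g k x > 0"
      using first_time[of t g y i, OF cg g0 y] ny unfolding g_def by auto
    define E where "E = exp (M * s)"
    have E: "E > 0" unfolding E_def by auto
    have vj: "v s $ j = - \<epsilon> * E" using s(3) unfolding g_def E_def by simp
    have sum: "(\<Sum>k\<in>UNIV. \<mu> $ j $ k * (v s $ k - v s $ j)) \<ge> 0"
    proof (intro sum_nonneg mult_nonneg_nonneg mu_nonneg)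
      fix k show "0 \<le> v s $ k - v s $ j" using s(3) s(4) unfolding g_def by (metis diff_ge_0_iff_ge add_le_cancel_right)
    qed
    have Ms: "M > r $ j - S s / K" using M[of s j] s by auto
    have "v s $ j * (r $ j - (1 / K) * S s) + \<epsilon> * (E * M) = \<epsilon> * E * (M - (r $ j - S s / K))"
      using vj by (simp add: algebra_simps)
    also have "\<dots> > 0" using eps E Ms by auto
    finally have pos: "v s $ j * (r $ j - (1 / K) * S s) + (\<Sum>k\<in>UNIV. \<mu> $ j $ k * (v s $ k - v s $ j)) + \<epsilon> * (exp (M * s) * M) > 0"
      using sum unfolding E_def by linarith
    obtain d where d: "d > 0" "\<forall>h>0. s - h \<in> {0..} \<longrightarrow> h < d \<longrightarrow> g j (s - h) < g j s"
      using has_real_derivative_pos_inc_left[OF dg[of s j] pos] s by auto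
    define h where "h = min (d/2) (s/2)"
    have "g j (s - h) < 0" using d s(1,3) unfolding h_def by auto
    moreover have "g j (s - h) > 0" using s(1,5) d unfolding h_def by auto
    ultimately show False by auto
  qed
  show ?thesis
  proof (rule ccontr)
    assume n: "\<not> v t $ i \<ge> 0"
    define \<epsilon> where "\<epsilon> = - v t $ i / (2 * exp (M * t))"
    have "\<epsilon> > 0" using n unfolding \<epsilon>_def by (auto simp: field_simps)
    from main[OF this, of t i] t have "v t $ i + \<epsilon> * exp (M * t) > 0" by auto
    moreover have "v t $ i + \<epsilon> * exp (M * t) = v t $ i / 2" unfolding \<epsilon>_def by simp
    ultimately show False using n by auto
  qed
qed




lemma between:
  fixes Z Z0 Zm ZM ea eb :: real
  assumes ea: "ea > 0" and eb: "eb > 0"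
    and a1: "Z^2*ea \<le> Z0^2" and a2: "Z0^2 \<le> Z^2*eb"
    and am: "Zm^2*ea = Z0^2" and aM: "ZM^2*eb = Z0^2"
    and s1: "Z*Z0 \<ge> 0" and s2: "Zm*Z0 \<ge> 0" and s3: "ZM*Z0 \<ge> 0"
  shows "(ZM \<le> Z \<and> Z \<le> Zm) \<or> (Zm \<le> Z \<and> Z \<le> ZM)"
proof -
  have q1: "Z^2 \<le> Zm^2" using a1 am ea by (metis mult_le_cancel_right_pos)
  have q2: "ZM^2 \<le> Z^2" using a2 aM eb by (metis mult_le_cancel_right_pos)
  have b1: "\<bar>Z\<bar> \<le> \<bar>Zm\<bar>" using q1 by (simp add: abs_le_square_iff)
  have b2: "\<bar>ZM\<bar> \<le> \<bar>Z\<bar>" using q2 by (simp add: abs_le_square_iff)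
  consider "Z0 > 0" | "Z0 < 0" | "Z0 = 0" by linarith
  then show ?thesis
  proof cases
    case 1
    then have "Z \<ge> 0" "Zm \<ge> 0" "ZM \<ge> 0" using s1 s2 s3 by (auto simp: zero_le_mult_iff)
    then show ?thesis using b1 b2 by auto
  next
    case 2
    then have "Z \<le> 0" "Zm \<le> 0" "ZM \<le> 0" using s1 s2 s3 by (auto simp: zero_le_mult_iff)
    then show ?thesis using b1 b2 by auto
  next
    case 3
    then have "Zm = 0" using am ea by auto
    then have "Z = 0" using b1 by auto
    then have "ZM = 0" using b2 by auto
    then show ?thesis using \<open>Z = 0\<close> \<open>Zm = 0\<close> by auto
  qed
qed

lemma inv_cmp:
  fixes x y K :: real
  assumes "x > 0" "y > 0" "1/x - 1/K \<le> 1/y - 1/K"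
  shows "y \<le> x"
proof -
  have "1/x \<le> 1/y" using assms(3) by simp
  then have "inverse (1/y) \<le> inverse (1/x)" by (rule le_imp_inverse_le) (use assms in auto)
  then show ?thesis by simp
qed

lemma final_exp:
  fixes N K Z0 xi t :: real
  assumes K: "K > 0" and N: "N > 0" and N0: "N0 > 0" and xi: "xi \<ge> 0" and t: "t \<ge> 0"
    and Z0: "Z0 = 1/N0 - 1/K"
    and a1: "(1/N - 1/K)^2 * exp(2*xi*t) \<le> Z0^2"
    and s: "(1/N - 1/K) * Z0 \<ge> 0"
  shows "\<bar>N - K\<bar> \<le> (K * max K N0 * \<bar>Z0\<bar>) * exp (- xi * t)"
proof -
  define Z where "Z = 1/N - 1/K"
  have e: "exp(2*xi*t) = (exp (xi*t))^2" by (simp add: power2_eq_square flip: exp_add)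
  have "(\<bar>Z\<bar> * exp (xi*t))^2 \<le> \<bar>Z0\<bar>^2" using a1 unfolding Z_def e by (simp add: power_mult_distrib)
  then have "\<bar>Z\<bar> * exp (xi*t) \<le> \<bar>Z0\<bar>" by (rule power2_le_imp_le) auto
  then have bz: "\<bar>Z\<bar> \<le> \<bar>Z0\<bar> * exp (- xi*t)" by (simp add: exp_minus field_simps)
  have "exp (- xi * t) \<le> 1" using xi t by auto
  then have bz1: "\<bar>Z\<bar> \<le> \<bar>Z0\<bar>" using bz by (meson abs_ge_zero dual_order.trans mult_left_le)
  have NK: "N - K = - K * N * Z" unfolding Z_def using K N by (simp add: field_simps)
  have Nle: "N \<le> max K N0"
  proof -
    have "1/N \<ge> min (1/K) (1/N0)"
    proof (cases "Z0 \<ge> 0")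
      case True
      then have "Z \<ge> 0" using s bz1 unfolding Z_def by (cases "Z0 = 0") (auto simp: zero_le_mult_iff)
      then show ?thesis unfolding Z_def by auto
    next
      case False
      then have "Z \<le> 0" using s unfolding Z_def by (simp add: zero_le_mult_iff)
      then have "Z \<ge> Z0" using bz1 False by auto
      then show ?thesis unfolding Z_def Z0 by auto
    qed
    also have "min (1/K) (1/N0) = 1 / max K N0"
    proof (cases "K \<le> N0")
      case True
      then have "1/N0 \<le> 1/K" using K by (intro divide_left_mono) auto
      then show ?thesis using True by (simp add: min_absorb2 max_absorb2)
    next
      case False
      then have "1/K \<le> 1/N0" using N0 by (intro divide_left_mono) auto
      then show ?thesis using False by (simp add: min_absorb1 max_absorb1)
    qed
    finally have "1 / max K N0 \<le> 1 / N" .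
    then have "inverse (1/N) \<le> inverse (1 / max K N0)" by (rule le_imp_inverse_le) (use K in auto)
    then show ?thesis by simp
  qed
  have "\<bar>N - K\<bar> = K * N * \<bar>Z\<bar>" unfolding NK using K N by (simp add: abs_mult)
  also have "\<dots> \<le> K * max K N0 * (\<bar>Z0\<bar> * exp (- xi*t))"
    using K N Nle bz by (intro mult_mono) auto
  finally show ?thesis by (simp add: mult.assoc)
qed




theorem lemma5p2:
  fixes K :: real and r :: "real^'n" and \<mu> :: "real^'n^'n"
    and v :: "real \<Rightarrow> real^'n" and Nmin Nmax :: "real \<Rightarrow> real"
  assumes K_pos: "K > 0"
    and r_pos: "\<And>i. r $ i > 0"
    and mu_nonneg: "\<And>i j. \<mu> $ i $ j \<ge> 0"
    and mu_sym: "\<And>i j. \<mu> $ i $ j = \<mu> $ j $ i"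
    and mu_irred: "irreducible_matrix \<mu>"
    and v_ode: "\<And>t. t \<ge> 0 \<Longrightarrow>
        (v has_vector_derivative
           (\<chi> i. v t $ i * (r $ i - (1 / K) * (\<Sum>j\<in>UNIV. r $ j * v t $ j))
                 + (\<Sum>j\<in>UNIV. \<mu> $ i $ j * (v t $ j - v t $ i))))
        (at t within {0..})"
    and v0_nonneg: "\<And>i. v 0 $ i \<ge> 0"
    and v0_nonzero: "v 0 \<noteq> 0"
    and Nmin_ode: "\<And>t. t \<ge> 0 \<Longrightarrow>
        (Nmin has_real_derivative
           (Min (range (\<lambda>i. r $ i)) * Nmin t * (1 - Nmin t / K))) (at t within {0..})"
    and Nmin_init: "Nmin 0 = (\<Sum>i\<in>UNIV. v 0 $ i)"
    and Nmax_ode: "\<And>t. t \<ge> 0 \<Longrightarrow>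
        (Nmax has_real_derivative
           (Max (range (\<lambda>i. r $ i)) * Nmax t * (1 - Nmax t / K))) (at t within {0..})"
    and Nmax_init: "Nmax 0 = (\<Sum>i\<in>UNIV. v 0 $ i)"
  shows "(\<exists>C c. C > 0 \<and> c > 0 \<and>
            (\<forall>t\<ge>0. \<bar>(\<Sum>i\<in>UNIV. v t $ i) - K\<bar> \<le> C * exp (- c * t)))
       \<and> (\<forall>t\<ge>0. min (Nmin t) (Nmax t) \<le> (\<Sum>i\<in>UNIV. v t $ i)
                 \<and> (\<Sum>i\<in>UNIV. v t $ i) \<le> max (Nmin t) (Nmax t))"
proof -
  define N where "N t = (\<Sum>i\<in>UNIV. v t $ i)" for t
  define S where "S t = (\<Sum>j\<in>UNIV. r $ j * v t $ j)" for t
  define xm where "xm = Min (range (\<lambda>i. r $ i))"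
  define xM where "xM = Max (range (\<lambda>i. r $ i))"
  have fin: "finite (range (\<lambda>i. r $ i))" by simp
  have xm_le: "xm \<le> r $ i" for i unfolding xm_def by (rule Min_le[OF fin]) auto
  have xM_ge: "r $ i \<le> xM" for i unfolding xM_def by (rule Max_ge[OF fin]) auto
  have ne: "range (\<lambda>i. r $ i) \<noteq> {}" by simp
  have "xm \<in> range (\<lambda>i. r $ i)" unfolding xm_def by (rule Min_in[OF fin ne])
  then obtain i1 where "xm = r $ i1" by (rule rangeE)
  then have xm_pos: "xm > 0" using r_pos[of i1] by simp
  have vnn: "v t $ i \<ge> 0" if "t \<ge> 0" for t i
    using v_nonneg[OF K_pos mu_nonneg v_ode v0_nonneg that] .
  have dN: "(N has_real_derivative S t * (1 - N t / K)) (at t within {0..})" if t: "t \<ge> 0" for t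
  proof -
    have dv: "((\<lambda>t. v t $ i) has_real_derivative
      (v t $ i * (r $ i - (1 / K) * S t) + (\<Sum>j\<in>UNIV. \<mu> $ i $ j * (v t $ j - v t $ i)))) (at t within {0..})" for i
      using comp_deriv[OF v_ode[OF t], of i] unfolding S_def by simp
    have d: "(N has_real_derivative (\<Sum>i\<in>UNIV. v t $ i * (r $ i - (1 / K) * S t) + (\<Sum>j\<in>UNIV. \<mu> $ i $ j * (v t $ j - v t $ i))))
        (at t within {0..})"
      unfolding N_def[abs_def] by (intro DERIV_sum dv)
    have sw: "(\<Sum>i\<in>UNIV. \<Sum>j\<in>UNIV. \<mu> $ i $ j * v t $ j) = (\<Sum>j\<in>UNIV. \<Sum>i\<in>UNIV. \<mu> $ i $ j * v t $ j)"
      by (rule sum.swap)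
    also have "\<dots> = (\<Sum>j\<in>UNIV. \<Sum>i\<in>UNIV. \<mu> $ j $ i * v t $ j)"
      by (intro sum.cong refl) (metis mu_sym)
    finally have z: "(\<Sum>i\<in>UNIV. \<Sum>j\<in>UNIV. \<mu> $ i $ j * (v t $ j - v t $ i)) = 0"
      by (simp add: right_diff_distrib sum_subtractf)
    have "(\<Sum>i\<in>UNIV. v t $ i * (r $ i - (1 / K) * S t)) = (\<Sum>i\<in>UNIV. r $ i * v t $ i - ((1/K) * S t) * v t $ i)"
      by (intro sum.cong refl) (simp add: algebra_simps)
    also have "\<dots> = S t - ((1/K) * S t) * N t"
      unfolding S_def N_def by (simp only: sum_subtractf sum_distrib_left)
    finally have a: "(\<Sum>i\<in>UNIV. v t $ i * (r $ i - (1 / K) * S t)) = S t - (1/K) * S t * N t" .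
    have "(\<Sum>i\<in>UNIV. v t $ i * (r $ i - (1 / K) * S t) + (\<Sum>j\<in>UNIV. \<mu> $ i $ j * (v t $ j - v t $ i)))
        = (\<Sum>i\<in>UNIV. v t $ i * (r $ i - (1 / K) * S t)) + (\<Sum>i\<in>UNIV. \<Sum>j\<in>UNIV. \<mu> $ i $ j * (v t $ j - v t $ i))"
      by (rule sum.distrib)
    also have "\<dots> = S t * (1 - N t / K)" unfolding a z by (simp add: algebra_simps)
    finally have "(\<Sum>i\<in>UNIV. v t $ i * (r $ i - (1 / K) * S t) + (\<Sum>j\<in>UNIV. \<mu> $ i $ j * (v t $ j - v t $ i)))
        = S t * (1 - N t / K)" .
    then show ?thesis using d by simp
  qed
  have "\<exists>i. v 0 $ i \<noteq> 0" using v0_nonzero by (auto simp: vec_eq_iff)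
  then obtain i0 where i0: "v 0 $ i0 \<noteq> 0" by blast
  have N0: "N 0 > 0" unfolding N_def
    by (rule sum_pos2[where i = i0]) (use i0 v0_nonneg[of i0] v0_nonneg in \<open>auto simp: less_le\<close>)
  have rhoN: "xm \<le> S t / N t \<and> S t / N t \<le> xM \<and> S t * (1 - N t / K) = S t / N t * N t * (1 - N t / K)"
    if t: "t \<ge> 0" and Np: "N t > 0" for t
  proof -
    have "xm * N t = (\<Sum>i\<in>UNIV. xm * v t $ i)" unfolding N_def by (simp add: sum_distrib_left)
    also have "\<dots> \<le> S t" unfolding S_def by (intro sum_mono mult_right_mono xm_le vnn t)
    finally have l: "xm * N t \<le> S t" .
    have "S t \<le> (\<Sum>i\<in>UNIV. xM * v t $ i)" unfolding S_def by (intro sum_mono mult_right_mono xM_ge vnn t)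
    also have "\<dots> = xM * N t" unfolding N_def by (simp add: sum_distrib_left)
    finally have u: "S t \<le> xM * N t" .
    show ?thesis using l u Np by (simp add: pos_le_divide_eq pos_divide_le_eq)
  qed
  have Nmin_ode': "(Nmin has_real_derivative xm * Nmin t * (1 - Nmin t / K)) (at t within {0..})" if "t \<ge> 0" for t
    using Nmin_ode[OF that] unfolding xm_def .
  have Nmax_ode': "(Nmax has_real_derivative xM * Nmax t * (1 - Nmax t / K)) (at t within {0..})" if "t \<ge> 0" for t
    using Nmax_ode[OF that] unfolding xM_def .
  have rmin: "xm \<le> xm \<and> xm \<le> xm \<and> xm * Nmin t * (1 - Nmin t / K) = xm * Nmin t * (1 - Nmin t / K)" for t
    by simp
  have rmax: "xM \<le> xM \<and> xM \<le> xM \<and> xM * Nmax t * (1 - Nmax t / K) = xM * Nmax t * (1 - Nmax t / K)" for t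
    by simp
  have Nmin0: "Nmin 0 = N 0" and Nmax0: "Nmax 0 = N 0" using Nmin_init Nmax_init unfolding N_def by auto
  have xm0: "xm \<ge> 0" using xm_pos by simp
  have xmM: "xm \<le> xM" using xm_le[of i1] xM_ge[of i1] by (rule order_trans)
  have xM0: "xM \<ge> 0" using xm_pos xmM by linarith
  have LN: "N t > 0 \<and> (1/N t - 1/K)^2 * exp(2*xm*t) \<le> (1/N 0 - 1/K)^2
       \<and> (1/N 0 - 1/K)^2 \<le> (1/N t - 1/K)^2 * exp(2*xM*t)
       \<and> (1/N t - 1/K) * (1/N 0 - 1/K) \<ge> 0" if t: "t \<ge> 0" for t
    apply (rule logistic_global[where K=K and u=N and D="\<lambda>t. S t * (1 - N t / K)" and \<rho>="\<lambda>t. S t / N t"])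
         apply (rule K_pos)
        apply (rule xm0)
       apply (rule N0)
      apply (rule dN, assumption)
     apply (rule rhoN, assumption, assumption)
    apply (rule t)
    done
  have Lm: "Nmin t > 0 \<and> (1/Nmin t - 1/K)^2 * exp(2*xm*t) \<le> (1/N 0 - 1/K)^2
       \<and> (1/N 0 - 1/K)^2 \<le> (1/Nmin t - 1/K)^2 * exp(2*xm*t)
       \<and> (1/Nmin t - 1/K) * (1/N 0 - 1/K) \<ge> 0" if t: "t \<ge> 0" for t
    apply (rule logistic_global[where K=K and u=Nmin and D="\<lambda>t. xm * Nmin t * (1 - Nmin t / K)" and \<rho>="\<lambda>t. xm", unfolded Nmin0])
         apply (rule K_pos)
        apply (rule xm0)
       apply (rule N0)
      apply (rule Nmin_ode', assumption)
     apply (rule rmin)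
    apply (rule t)
    done
  have LM: "Nmax t > 0 \<and> (1/Nmax t - 1/K)^2 * exp(2*xM*t) \<le> (1/N 0 - 1/K)^2
       \<and> (1/N 0 - 1/K)^2 \<le> (1/Nmax t - 1/K)^2 * exp(2*xM*t)
       \<and> (1/Nmax t - 1/K) * (1/N 0 - 1/K) \<ge> 0" if t: "t \<ge> 0" for t
    apply (rule logistic_global[where K=K and u=Nmax and D="\<lambda>t. xM * Nmax t * (1 - Nmax t / K)" and \<rho>="\<lambda>t. xM", unfolded Nmax0])
         apply (rule K_pos)
        apply (rule xM0)
       apply (rule N0)
      apply (rule Nmax_ode', assumption)
     apply (rule rmax)
    apply (rule t)
    done
  have part2: "min (Nmin t) (Nmax t) \<le> N t \<and> N t \<le> max (Nmin t) (Nmax t)" if t: "t \<ge> 0" for t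
  proof -
    note A = LN[OF t] and B = Lm[OF t] and C = LM[OF t]
    have "(1/Nmax t - 1/K \<le> 1/N t - 1/K \<and> 1/N t - 1/K \<le> 1/Nmin t - 1/K)
        \<or> (1/Nmin t - 1/K \<le> 1/N t - 1/K \<and> 1/N t - 1/K \<le> 1/Nmax t - 1/K)"
    proof -
      have e1: "exp(2*xm*t) > 0" and e2: "exp(2*xM*t) > 0" by simp_all
      have h1: "(1/N t - 1/K)^2 * exp(2*xm*t) \<le> (1/N 0 - 1/K)^2" using A by blast
      have h2: "(1/N 0 - 1/K)^2 \<le> (1/N t - 1/K)^2 * exp(2*xM*t)" using A by blast
      have hm: "(1/Nmin t - 1/K)^2 * exp(2*xm*t) = (1/N 0 - 1/K)^2" using B by (meson order_antisym)
      have hM: "(1/Nmax t - 1/K)^2 * exp(2*xM*t) = (1/N 0 - 1/K)^2" using C by (meson order_antisym)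
      have s1: "(1/N t - 1/K) * (1/N 0 - 1/K) \<ge> 0" using A by blast
      have s2: "(1/Nmin t - 1/K) * (1/N 0 - 1/K) \<ge> 0" using B by blast
      have s3: "(1/Nmax t - 1/K) * (1/N 0 - 1/K) \<ge> 0" using C by blast
      show ?thesis by (rule between[OF e1 e2 h1 h2 hm hM s1 s2 s3])
    qed
    note D = this
    have p: "N t > 0" "Nmin t > 0" "Nmax t > 0" using A B C by auto
    from D show ?thesis
    proof (elim disjE)
      assume h: "1/Nmax t - 1/K \<le> 1/N t - 1/K \<and> 1/N t - 1/K \<le> 1/Nmin t - 1/K"
      have "N t \<le> Nmax t" using inv_cmp[of "Nmax t" "N t" K] h p by blast
      moreover have "Nmin t \<le> N t" using inv_cmp[of "N t" "Nmin t" K] h p by blast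
      ultimately show ?thesis by linarith
    next
      assume h: "1/Nmin t - 1/K \<le> 1/N t - 1/K \<and> 1/N t - 1/K \<le> 1/Nmax t - 1/K"
      have "N t \<le> Nmin t" using inv_cmp[of "Nmin t" "N t" K] h p by blast
      moreover have "Nmax t \<le> N t" using inv_cmp[of "N t" "Nmax t" K] h p by blast
      ultimately show ?thesis by linarith
    qed
  qed
  define C where "C = K * max K (N 0) * \<bar>1/N 0 - 1/K\<bar> + 1"
  have part1: "\<bar>N t - K\<bar> \<le> C * exp (- xm * t)" if t: "t \<ge> 0" for t
  proof -
    note A = LN[OF t]
    have "\<bar>N t - K\<bar> \<le> (K * max K (N 0) * \<bar>1/N 0 - 1/K\<bar>) * exp (- xm * t)"
      by (rule final_exp[OF K_pos _ N0 xm0 t refl]) (use A in auto)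
    also have "\<dots> \<le> C * exp (- xm * t)" unfolding C_def by (intro mult_right_mono) auto
    finally show ?thesis .
  qed
  have Cpos: "C > 0" unfolding C_def using K_pos N0 by (intro add_nonneg_pos) auto
  have P1: "\<forall>t\<ge>0. \<bar>(\<Sum>i\<in>UNIV. v t $ i) - K\<bar> \<le> C * exp (- xm * t)"
  proof (intro allI impI)
    fix t :: real assume "t \<ge> 0"
    from part1[OF this] show "\<bar>(\<Sum>i\<in>UNIV. v t $ i) - K\<bar> \<le> C * exp (- xm * t)" unfolding N_def .
  qed
  have P2: "\<forall>t\<ge>0. min (Nmin t) (Nmax t) \<le> (\<Sum>i\<in>UNIV. v t $ i) \<and> (\<Sum>i\<in>UNIV. v t $ i) \<le> max (Nmin t) (Nmax t)"
  proof (intro allI impI)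
    fix t :: real assume "t \<ge> 0"
    from part2[OF this] show "min (Nmin t) (Nmax t) \<le> (\<Sum>i\<in>UNIV. v t $ i) \<and> (\<Sum>i\<in>UNIV. v t $ i) \<le> max (Nmin t) (Nmax t)"
      unfolding N_def .
  qed
  show ?thesis
    apply (rule conjI[OF _ P2])
    apply (rule exI[of _ C], rule exI[of _ xm])
    using Cpos xm_pos P1 by simp
qed


end
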